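(* Let $x^1,\dots,x^{\ell_1},\hat x^1,\dots,\hat x^{\ell_2}\in\mathbb{R}^n$ with $\ell_1\ge1$, let $\mathcal{P}=\{\sum_{i=1}^{\ell_1}\theta_ix^i+\sum_{j=1}^{\ell_2}\hat\theta_j\hat x^j:\theta_i\ge0,\ \sum_i\theta_i=1,\ \hat\theta_j\ge0\}$, let $X=[x^1,\dots,x^{\ell_1},\hat x^1,\dots,\hat x^{\ell_2}]\in\mathbb{R}^{n\times(\ell_1+\ell_2)}$, and let $A\in\mathbb{R}^{n\times n}$. Then $\mathcal{P}$ is an invariant set for the continuous system $\dot x(t)=Ax(t)$ if and only if there exists a matrix $\tilde L\in\mathbb{R}^{(\ell_1+\ell_2)\times(\ell_1+\ell_2)}$ whose off-diagonal entries are all nonnegative such that $X\tilde L=AX$ and $\bar 1\tilde L=0$, where $\bar 1=(1,\dots,1,0,\dots,0)$ is the row vector with $\ell_1$ ones followed by $\ell_2$ zeros (i.e., in every column of $\tilde L$ the first $\ell_1$ entries sum to zero).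
   Context: A set $\mathcal{S}\subseteq\mathbb{R}^n$ is an invariant set for the continuous system $\dot x=Ax$ if $x(0)\in\mathcal{S}$ implies $x(t)\in\mathcal{S}$ for all $t\ge 0$; equivalently $e^{At}\mathcal{S}\subseteq\mathcal{S}$ for all $t\ge0$. *)

theory Defs
  imports "HOL-Analysis.Analysis"
begin

definition lin_solution :: "real^'n^'n \<Rightarrow> (real \<Rightarrow> real^'n) \<Rightarrow> bool" where
  "lin_solution A x \<longleftrightarrow>
     (\<forall>t\<ge>0. (x has_vector_derivative (A *v x t)) (at t within {0..}))"

definition invariant_set :: "real^'n^'n \<Rightarrow> (real^'n) set \<Rightarrow> bool" where
  "invariant_set A S \<longleftrightarrow>
     (\<forall>x. lin_solution A x \<longrightarrow> x 0 \<in> S \<longrightarrow> (\<forall>t\<ge>0. x t \<in> S))"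

definition poly_set :: "nat \<Rightarrow> nat \<Rightarrow> (nat \<Rightarrow> real^'n) \<Rightarrow> (nat \<Rightarrow> real^'n) \<Rightarrow> (real^'n) set" where
  "poly_set l1 l2 x xh =
     {(\<Sum>i<l1. \<theta> i *\<^sub>R x i) + (\<Sum>j<l2. \<theta>h j *\<^sub>R xh j) | \<theta> \<theta>h.
        (\<forall>i<l1. \<theta> i \<ge> 0) \<and> (\<Sum>i<l1. \<theta> i) = 1 \<and> (\<forall>j<l2. \<theta>h j \<ge> 0)}"

text \<open>Column k (k < l1 + l2) of the matrix X = [x^1 ... x^l1, xh^1 ... xh^l2].\<close>
definition Xcol :: "nat \<Rightarrow> (nat \<Rightarrow> real^'n) \<Rightarrow> (nat \<Rightarrow> real^'n) \<Rightarrow> nat \<Rightarrow> real^'n" where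
  "Xcol l1 x xh k = (if k < l1 then x k else xh (k - l1))"

end

theory Submission
  imports Defs "HOL-Analysis.Analysis"
begin


typedef (overloaded) 'a endo = "UNIV :: ('a::real_normed_vector \<Rightarrow>\<^sub>L 'a) set"
  morphisms eop Endo by simp

setup_lifting type_definition_endo

instantiation endo :: (real_normed_vector) real_normed_vector
begin
lift_definition norm_endo :: "'a endo \<Rightarrow> real" is norm .
lift_definition minus_endo :: "'a endo \<Rightarrow> 'a endo \<Rightarrow> 'a endo" is "(-)" .
lift_definition plus_endo :: "'a endo \<Rightarrow> 'a endo \<Rightarrow> 'a endo" is "(+)" .
lift_definition uminus_endo :: "'a endo \<Rightarrow> 'a endo" is "uminus" .
lift_definition zero_endo :: "'a endo" is "0" .
lift_definition scaleR_endo :: "real \<Rightarrow> 'a endo \<Rightarrow> 'a endo" is "scaleR" .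
definition dist_endo :: "'a endo \<Rightarrow> 'a endo \<Rightarrow> real"
  where "dist_endo a b = norm (a - b)"
definition uniformity_endo :: "('a endo \<times> 'a endo) filter" where
  "uniformity_endo = (INF e\<in>{0 <..}. principal {(x, y). dist x y < e})"
definition open_endo :: "'a endo set \<Rightarrow> bool"
  where "open_endo S = (\<forall>x\<in>S. \<forall>\<^sub>F (x', y) in uniformity. x' = x \<longrightarrow> y \<in> S)"
definition sgn_endo :: "'a endo \<Rightarrow> 'a endo"
  where "sgn_endo x = scaleR (inverse (norm x)) x"
instance
  apply standard
  unfolding dist_endo_def open_endo_def sgn_endo_def uniformity_endo_def
  apply (rule refl | (transfer, force simp: norm_triangle_ineq algebra_simps scaleR_add_right scaleR_add_left))+
  done
end

instantiation endo :: (euclidean_space) real_normed_algebra_1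
begin
lift_definition times_endo :: "'a endo \<Rightarrow> 'a endo \<Rightarrow> 'a endo" is "(o\<^sub>L)" .
lift_definition one_endo :: "'a endo" is "id_blinfun" .
instance
  apply standard
                 apply (transfer; rule blinfun_eqI; simp add: blinfun.bilinear_simps)+
    apply transfer
    apply (metis SOME_Basis blinfun.zero_left blinfun_apply_id_blinfun nonzero_Basis)
   apply transfer apply (rule norm_blinfun_compose)
  apply transfer apply simp
  done
end

lemma dist_eop: "dist (eop a) (eop b) = dist a b"
  unfolding dist_endo_def dist_norm by transfer simp

instance endo :: (banach) banach
proof
  fix X :: "nat \<Rightarrow> 'a endo"
  assume "Cauchy X"
  then have "Cauchy (\<lambda>n. eop (X n))" unfolding Cauchy_def dist_eop .
  then obtain l where l: "(\<lambda>n. eop (X n)) \<longlonglongrightarrow> l" using convergent_def Cauchy_convergent_iff by blast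
  have "X \<longlonglongrightarrow> Endo l"
  proof -
    have d: "dist (X n) (Endo l) = dist (eop (X n)) l" for n
      by (metis dist_eop Endo_inverse UNIV_I)
    show ?thesis using l unfolding tendsto_iff d .
  qed
  then show "convergent X" unfolding convergent_def by blast
qed

lemma eop_mult: "eop (a * b) v = eop a (eop b v)" by transfer simp
lemma eop_one: "eop 1 v = v" by transfer simp
lemma eop_add: "eop (a + b) v = eop a v + eop b v" by transfer (simp add: blinfun.bilinear_simps)
lemma eop_minus: "eop (- a) v = - eop a v" by transfer (simp add: blinfun.bilinear_simps)
lemma eop_scaleR: "eop (c *\<^sub>R a) v = c *\<^sub>R eop a v" by transfer (simp add: blinfun.bilinear_simps)
lemma norm_eop: "norm (eop a v) \<le> norm a * norm v" by transfer (rule norm_blinfun)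
lemma bounded_linear_eop: "bounded_linear (\<lambda>a. eop a v)"
  by (rule bounded_linear_intro[where K="norm v"]) (auto simp: eop_add eop_scaleR norm_eop)



definition Mop :: "real^'n^'n \<Rightarrow> (real^'n) endo" where
  "Mop A = Endo (Blinfun (\<lambda>v. A *v v))"

lemma eop_Mop: "eop (Mop A) v = A *v v"
  unfolding Mop_def by (simp add: Endo_inverse bounded_linear_Blinfun_apply)

lemma bounded_bilinear_eop: "bounded_bilinear (\<lambda>a v. eop a v)"
proof -
  have "bounded_bilinear (\<lambda>a v. blinfun_apply a v)" by (rule bounded_bilinear_blinfun_apply)
  show ?thesis
    apply (rule bounded_bilinear.intro)
        apply (simp_all add: eop_add eop_scaleR blinfun.bilinear_simps)
    apply (rule exI[where x=1]) using norm_eop by auto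
qed

lemma eop_exp_deriv:
  "((\<lambda>t. eop (exp (t *\<^sub>R M)) p) has_vector_derivative eop M (eop (exp (t *\<^sub>R M)) p)) (at t within S)"
proof -
  have "((\<lambda>t. exp (t *\<^sub>R M)) has_vector_derivative M * exp (t *\<^sub>R M)) (at t within S)"
    using exp_scaleR_has_vector_derivative_left has_vector_derivative_at_within by blast
  from bounded_linear.has_vector_derivative[OF bounded_linear_eop this, of p]
  show ?thesis by (simp add: eop_mult)
qed

lemma sol_exists: "lin_solution A (\<lambda>t. eop (exp (t *\<^sub>R Mop A)) p)"
  unfolding lin_solution_def using eop_exp_deriv[of "Mop A"] by (simp add: eop_Mop)

lemma sol_0: "eop (exp (0 *\<^sub>R M)) p = p"
  by (simp add: eop_one)

lemma sol_unique:
  assumes "lin_solution A y" "t \<ge> 0"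
  shows "y t = eop (exp (t *\<^sub>R Mop A)) (y 0)"
proof -
  let ?M = "Mop A"
  define g where "g s = eop (exp (s *\<^sub>R (- ?M))) (y s)" for s
  have "(g has_vector_derivative 0) (at s within {0..})" if "s \<in> {0..}" for s
  proof -
    have d1: "((\<lambda>t. exp (t *\<^sub>R (- ?M))) has_vector_derivative exp (s *\<^sub>R (- ?M)) * (- ?M)) (at s within {0..})"
      by (rule exp_scaleR_has_vector_derivative_right)
    have d2: "(y has_vector_derivative (A *v y s)) (at s within {0..})"
      using assms(1) that unfolding lin_solution_def by auto
    from bounded_bilinear.has_vector_derivative[OF bounded_bilinear_eop d1 d2]
    show ?thesis unfolding g_def by (simp add: eop_mult eop_minus eop_Mop blinfun.bilinear_simps)
  qed
  then obtain c where c: "\<And>s. s \<in> {0..} \<Longrightarrow> g s = c"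
    using has_vector_derivative_zero_constant[of "{0..}" g] by (auto simp: convex_real_interval)
  have "g t = g 0" using c assms(2) by simp
  then have "eop (exp (t *\<^sub>R ?M)) (g t) = eop (exp (t *\<^sub>R ?M)) (y 0)"
    by (simp add: g_def eop_one)
  moreover have "exp (t *\<^sub>R ?M) * exp (t *\<^sub>R (- ?M)) = 1"
    by (simp add: exp_add_commuting[symmetric] scaleR_right.minus)
  ultimately show ?thesis by (metis g_def eop_mult eop_one)
qed

lemma exp_shift:
  fixes M :: "'a::euclidean_space endo"
  shows "exp (t *\<^sub>R M) = exp (-(c*t)) *\<^sub>R exp (t *\<^sub>R (M + c *\<^sub>R 1))"
proof -
  have e1: "t *\<^sub>R (M + c *\<^sub>R 1) = t *\<^sub>R M + (c*t) *\<^sub>R 1"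
    by (simp add: scaleR_add_right)
  have e2: "exp ((c*t) *\<^sub>R (1::'a endo)) = exp (c*t) *\<^sub>R 1"
    using exp_of_real[of "c*t", where 'a="'a endo"] by (simp add: of_real_def)
  have "exp (t *\<^sub>R (M + c *\<^sub>R 1)) = exp (t *\<^sub>R M) * exp ((c*t) *\<^sub>R 1)"
    unfolding e1 by (rule exp_add_commuting) simp
  then have "exp (t *\<^sub>R (M + c *\<^sub>R 1)) = exp (c*t) *\<^sub>R exp (t *\<^sub>R M)"
    by (simp add: e2 mult_scaleR_right)
  then show ?thesis by (simp add: exp_minus_inverse exp_minus field_simps)
qed

lemma power_scaleR': "(t *\<^sub>R (X::'a::real_algebra_1)) ^ k = t^k *\<^sub>R X^k"
  by (induction k) (simp_all add: mult_scaleR_left mult_scaleR_right)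

lemma eop_pow: "eop ((M + c *\<^sub>R 1) ^ k) p = ((\<lambda>v. eop M v + c *\<^sub>R v) ^^ k) p"
  by (induction k) (simp_all add: eop_one eop_mult eop_add eop_scaleR)

lemma exp_series:
  fixes M :: "'a::euclidean_space endo"
  shows "(\<lambda>k. (t^k / fact k) *\<^sub>R ((\<lambda>v. eop M v + c *\<^sub>R v) ^^ k) p)
     sums eop (exp (t *\<^sub>R (M + c *\<^sub>R 1))) p"
proof -
  have "(\<lambda>k. (t *\<^sub>R (M + c *\<^sub>R 1))^k /\<^sub>R fact k) sums exp (t *\<^sub>R (M + c *\<^sub>R 1))"
    by (rule exp_converges)
  from bounded_linear.sums[OF bounded_linear_eop this, of p]
  show ?thesis by (simp add: eop_scaleR eop_pow power_scaleR' divide_inverse_commute)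
qed



definition cone_of :: "(nat \<Rightarrow> 'a::real_vector) \<Rightarrow> nat \<Rightarrow> 'a set" where
  "cone_of v m = {(\<Sum>i<m. a i *\<^sub>R v i) | a. \<forall>i<m. a i \<ge> 0}"

lemma convex_cone_sum_in:
  assumes "convex_cone H" "finite I" "\<And>i. i \<in> I \<Longrightarrow> a i \<ge> 0 \<and> v i \<in> H"
  shows "(\<Sum>i\<in>I. a i *\<^sub>R v i) \<in> H"
  using assms(2,3)
proof (induction I rule: finite_induct)
  case empty then show ?case using assms(1) by (simp add: convex_cone_iff)
next
  case (insert j I)
  then show ?case using assms(1) unfolding convex_cone_iff by simp
qed

lemma convex_cone_cone_of: "convex_cone (cone_of v m)"
  unfolding convex_cone_iff
proof (intro conjI ballI allI impI)
  show "0 \<in> cone_of v m" unfolding cone_of_def by (rule CollectI, rule exI[where x="\<lambda>_. 0"]) simp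
next
  fix p q assume "p \<in> cone_of v m" "q \<in> cone_of v m"
  then obtain a b where "p = (\<Sum>i<m. a i *\<^sub>R v i)" "\<forall>i<m. a i \<ge> 0"
     "q = (\<Sum>i<m. b i *\<^sub>R v i)" "\<forall>i<m. b i \<ge> 0" unfolding cone_of_def by blast
  then show "p + q \<in> cone_of v m" unfolding cone_of_def
    by (intro CollectI exI[where x="\<lambda>i. a i + b i"]) (simp add: scaleR_add_left sum.distrib)
next
  fix p and c :: real assume "p \<in> cone_of v m" "c \<ge> 0"
  then obtain a where "p = (\<Sum>i<m. a i *\<^sub>R v i)" "\<forall>i<m. a i \<ge> 0" unfolding cone_of_def by blast
  then show "c *\<^sub>R p \<in> cone_of v m" using \<open>c \<ge> 0\<close> unfolding cone_of_def
    by (intro CollectI exI[where x="\<lambda>i. c * a i"]) (simp add: scaleR_sum_right)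
qed

lemma cone_of_hull: "cone_of v m = convex_cone hull (v ` {..<m})"
proof
  show "cone_of v m \<subseteq> convex_cone hull (v ` {..<m})"
  proof
    fix p assume "p \<in> cone_of v m"
    then obtain a where "p = (\<Sum>i<m. a i *\<^sub>R v i)" "\<forall>i<m. a i \<ge> 0" unfolding cone_of_def by blast
    then show "p \<in> convex_cone hull (v ` {..<m})"
      using convex_cone_sum_in[OF convex_cone_convex_cone_hull, of "{..<m}" a v "v ` {..<m}"]
      by (simp add: hull_inc)
  qed
next
  have "v ` {..<m} \<subseteq> cone_of v m"
  proof
    fix p assume "p \<in> v ` {..<m}"
    then obtain j where j: "j < m" "p = v j" by auto
    have "(\<Sum>i<m. (if i = j then 1 else 0) *\<^sub>R v i) = v j"
      using j(1) by (simp add: if_distrib[of "\<lambda>c. c *\<^sub>R _"] cong: if_cong)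
    then show "p \<in> cone_of v m" unfolding cone_of_def using j
      by (intro CollectI exI[where x="\<lambda>i. if i = j then 1 else 0"]) simp
  qed
  then show "convex_cone hull (v ` {..<m}) \<subseteq> cone_of v m"
    by (rule hull_minimal) (rule convex_cone_cone_of)
qed

lemma closed_cone_of: "closed (cone_of (v :: nat \<Rightarrow> 'a::euclidean_space) m)"
  unfolding cone_of_hull by (rule closed_convex_cone_hull) simp

definition simplex_of :: "(nat \<Rightarrow> 'a::real_vector) \<Rightarrow> nat \<Rightarrow> 'a set" where
  "simplex_of v m = {(\<Sum>i<m. a i *\<^sub>R v i) | a. (\<forall>i<m. a i \<ge> 0) \<and> (\<Sum>i<m. a i) = 1}"

lemma simplex_of_hull: "simplex_of v m = convex hull (v ` {..<m})"
proof
  show "simplex_of v m \<subseteq> convex hull (v ` {..<m})"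
  proof
    fix p assume "p \<in> simplex_of v m"
    then obtain a where "p = (\<Sum>i<m. a i *\<^sub>R v i)" "\<forall>i<m. a i \<ge> 0" "(\<Sum>i<m. a i) = 1"
      unfolding simplex_of_def by blast
    then show "p \<in> convex hull (v ` {..<m})"
      using convex_sum[OF _ convex_convex_hull, of "{..<m}" a v "v ` {..<m}"]
      by (simp add: hull_inc)
  qed
next
  have "v ` {..<m} \<subseteq> simplex_of v m"
  proof
    fix p assume "p \<in> v ` {..<m}"
    then obtain j where j: "j < m" "p = v j" by auto
    have "(\<Sum>i<m. (if i = j then 1 else 0) *\<^sub>R v i) = v j"
      using j(1) by (simp add: if_distrib[of "\<lambda>c. c *\<^sub>R _"] cong: if_cong)
    moreover have "(\<Sum>i<m. (if i = j then 1 else 0::real)) = 1" using j(1) by simp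
    ultimately show "p \<in> simplex_of v m" unfolding simplex_of_def using j
      by (intro CollectI exI[where x="\<lambda>i. if i = j then 1 else 0"]) simp
  qed
  moreover have "convex (simplex_of v m)"
    unfolding convex_def
  proof (intro ballI allI impI)
    fix p q and u w :: real
    assume "p \<in> simplex_of v m" "q \<in> simplex_of v m" "0 \<le> u" "0 \<le> w" "u + w = 1"
    then obtain a b where "p = (\<Sum>i<m. a i *\<^sub>R v i)" "\<forall>i<m. a i \<ge> 0" "(\<Sum>i<m. a i) = 1"
      "q = (\<Sum>i<m. b i *\<^sub>R v i)" "\<forall>i<m. b i \<ge> 0" "(\<Sum>i<m. b i) = 1"
      unfolding simplex_of_def by blast
    moreover have "(\<Sum>i<m. u * a i + w * b i) = u * (\<Sum>i<m. a i) + w * (\<Sum>i<m. b i)"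
      by (simp add: sum.distrib sum_distrib_left)
    ultimately show "u *\<^sub>R p + w *\<^sub>R q \<in> simplex_of v m" unfolding simplex_of_def
      using \<open>0 \<le> u\<close> \<open>0 \<le> w\<close> \<open>u + w = 1\<close>
      by (intro CollectI exI[where x="\<lambda>i. u * a i + w * b i"])
         (simp add: scaleR_add_left sum.distrib scaleR_sum_right)
  qed
  ultimately show "convex hull (v ` {..<m}) \<subseteq> simplex_of v m"
    by (rule hull_minimal)
qed

lemma poly_set_sums: "poly_set l1 l2 x xh = (\<Union>b\<in>cone_of xh l2. \<Union>a\<in>simplex_of x l1. {b + a})"
proof
  show "poly_set l1 l2 x xh \<subseteq> (\<Union>b\<in>cone_of xh l2. \<Union>a\<in>simplex_of x l1. {b + a})"
  proof
    fix p assume "p \<in> poly_set l1 l2 x xh"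
    then obtain \<theta> \<theta>h where p: "p = (\<Sum>i<l1. \<theta> i *\<^sub>R x i) + (\<Sum>j<l2. \<theta>h j *\<^sub>R xh j)"
      "\<forall>i<l1. \<theta> i \<ge> 0" "(\<Sum>i<l1. \<theta> i) = 1" "\<forall>j<l2. \<theta>h j \<ge> 0"
      unfolding poly_set_def by blast
    have "(\<Sum>j<l2. \<theta>h j *\<^sub>R xh j) \<in> cone_of xh l2" unfolding cone_of_def using p by blast
    moreover have "(\<Sum>i<l1. \<theta> i *\<^sub>R x i) \<in> simplex_of x l1" unfolding simplex_of_def using p by blast
    ultimately show "p \<in> (\<Union>b\<in>cone_of xh l2. \<Union>a\<in>simplex_of x l1. {b + a})"
      using p(1) by (metis (no_types, lifting) UN_iff add.commute singletonI)
  qed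
next
  show "(\<Union>b\<in>cone_of xh l2. \<Union>a\<in>simplex_of x l1. {b + a}) \<subseteq> poly_set l1 l2 x xh"
  proof clarify
    fix b a assume "b \<in> cone_of xh l2" "a \<in> simplex_of x l1"
    then obtain \<theta> \<theta>h where "a = (\<Sum>i<l1. \<theta> i *\<^sub>R x i)"
      "\<forall>i<l1. \<theta> i \<ge> 0" "(\<Sum>i<l1. \<theta> i) = 1" "b = (\<Sum>j<l2. \<theta>h j *\<^sub>R xh j)" "\<forall>j<l2. \<theta>h j \<ge> 0"
      unfolding cone_of_def simplex_of_def by blast
    then show "b + a \<in> poly_set l1 l2 x xh" unfolding poly_set_def
      by (intro CollectI exI[where x=\<theta>] exI[where x=\<theta>h]) (simp add: add.commute)
  qed
qed

lemma closed_poly_set: "closed (poly_set l1 l2 (x :: nat \<Rightarrow> real^'n) xh)"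
  unfolding poly_set_sums
  by (rule closed_compact_sums[OF closed_cone_of])
     (simp add: simplex_of_hull compact_convex_hull finite_imp_compact)



lemma sum_split_add: fixes a b :: nat shows "(\<Sum>k<a+b. f k) = (\<Sum>k<a. f k) + (\<Sum>j<b. f (a+j))"
  by (induction b) (simp_all add: add.assoc)

lemma mv_sum: "A *v (\<Sum>i\<in>S. f i) = (\<Sum>i\<in>S. A *v f i)"
  by (induction S rule: infinite_finite_induct) (simp_all add: matrix_vector_right_distrib)

lemma Xcol_lo[simp]: "i < l1 \<Longrightarrow> Xcol l1 x xh i = x i"
  by (simp add: Xcol_def)
lemma Xcol_hi[simp]: "Xcol l1 x xh (l1 + j) = xh j"
  by (simp add: Xcol_def)

lemma sum_if_lt: fixes l1 l2 :: nat shows "(\<Sum>j<l1+l2. if j < l1 then f j else 0) = (\<Sum>j<l1. f j)"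
  by (simp add: sum_split_add not_add_less1)

lemma in_poly_from_w:
  assumes "\<forall>i<l1+l2. w i \<ge> 0" "(\<Sum>i<l1. w i) = 1"
  shows "(\<Sum>i<l1+l2. w i *\<^sub>R Xcol l1 x xh i) \<in> poly_set l1 l2 x xh"
  unfolding poly_set_def sum_split_add using assms
  by (intro CollectI exI[where x=w] exI[where x="\<lambda>j. w (l1+j)"]) simp

lemma poly_to_w:
  assumes "p \<in> poly_set l1 l2 x xh"
  obtains w where "\<forall>i<l1+l2. w i \<ge> 0" "(\<Sum>i<l1. w i) = 1"
    "p = (\<Sum>i<l1+l2. w i *\<^sub>R Xcol l1 x xh i)"
proof -
  from assms obtain \<theta> \<theta>h where p: "p = (\<Sum>i<l1. \<theta> i *\<^sub>R x i) + (\<Sum>j<l2. \<theta>h j *\<^sub>R xh j)"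
      "\<forall>i<l1. \<theta> i \<ge> 0" "(\<Sum>i<l1. \<theta> i) = 1" "\<forall>j<l2. \<theta>h j \<ge> 0"
      unfolding poly_set_def by blast
  define w where "w i = (if i < l1 then \<theta> i else \<theta>h (i - l1))" for i
  have "\<forall>i<l1+l2. w i \<ge> 0" using p unfolding w_def by auto
  moreover have "(\<Sum>i<l1. w i) = 1" using p unfolding w_def by simp
  moreover have "p = (\<Sum>i<l1+l2. w i *\<^sub>R Xcol l1 x xh i)"
    unfolding sum_split_add using p(1) by (simp add: w_def)
  ultimately show ?thesis using that by blast
qed

lemma sum_delta_scaleR: fixes f :: "'b \<Rightarrow> 'a::real_vector" shows "(\<Sum>i\<in>S. (if i = j then c else 0) *\<^sub>R f i) = (if j \<in> S \<and> finite S then c *\<^sub>R f j else 0)"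
proof (cases "finite S")
  case True
  have "(\<Sum>i\<in>S. (if i = j then c else 0) *\<^sub>R f i) = (\<Sum>i\<in>S. if i = j then c *\<^sub>R f j else 0)"
    by (rule sum.cong) auto
  then show ?thesis using True by (simp add: sum.delta)
qed simp

lemma bwd:
  fixes x xh :: "nat \<Rightarrow> real^'n" and A :: "real^'n^'n" and L :: "nat \<Rightarrow> nat \<Rightarrow> real"
  assumes Lnn: "\<forall>i<l1+l2. \<forall>j<l1+l2. i \<noteq> j \<longrightarrow> L i j \<ge> 0"
    and LX: "\<forall>j<l1+l2. (\<Sum>k<l1+l2. L k j *\<^sub>R Xcol l1 x xh k) = A *v Xcol l1 x xh j"
    and L1: "\<forall>j<l1+l2. (\<Sum>k<l1. L k j) = 0"
  shows "invariant_set A (poly_set l1 l2 x xh)"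
  unfolding invariant_set_def
proof (intro allI impI)
  fix y and t :: real assume sol: "lin_solution A y" and y0: "y 0 \<in> poly_set l1 l2 x xh" and t: "0 \<le> t"
  define m where "m = l1 + l2"
  define X where "X = Xcol l1 x xh"
  define c where "c = (\<Sum>j<m. \<bar>L j j\<bar>)"
  define N where "N i j = L i j + (if i = j then c else 0)" for i j
  define Nop where "Nop \<theta> = (\<lambda>i. \<Sum>j<m. N i j * \<theta> j)" for \<theta> :: "nat \<Rightarrow> real"
  define Xop where "Xop \<theta> = (\<Sum>i<m. \<theta> i *\<^sub>R X i)" for \<theta> :: "nat \<Rightarrow> real"
  define B where "B v = A *v v + c *\<^sub>R v" for v
  obtain w0 where w0: "\<forall>i<m. w0 i \<ge> 0" "(\<Sum>i<l1. w0 i) = 1" "y 0 = Xop w0"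
    using poly_to_w[OF y0] unfolding Xop_def X_def m_def by blast
  define \<Theta> where "\<Theta> k = (Nop ^^ k) w0" for k
  have c0: "c \<ge> 0" unfolding c_def by (simp add: sum_nonneg)
  have cge: "L j j + c \<ge> 0" if "j < m" for j
  proof -
    have "\<bar>L j j\<bar> \<le> c" unfolding c_def
      by (rule member_le_sum[where f="\<lambda>j. \<bar>L j j\<bar>"]) (use that in auto)
    then show ?thesis by linarith
  qed
  have Nnn: "N i j \<ge> 0" if "i < m" "j < m" for i j
    using Lnn cge that unfolding N_def m_def by auto
  have Ncol: "(\<Sum>i<l1. N i j) = (if j < l1 then c else 0)" if "j < m" for j
    using L1 that unfolding N_def m_def by (simp add: sum.distrib)
  have col: "(\<Sum>i<m. N i j *\<^sub>R X i) = B (X j)" if "j < m" for j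
    using LX that unfolding N_def B_def m_def X_def
    by (simp add: scaleR_add_left sum.distrib sum_delta_scaleR)
  have XN: "Xop (Nop \<theta>) = B (Xop \<theta>)" for \<theta>
  proof -
    have "Xop (Nop \<theta>) = (\<Sum>i<m. \<Sum>j<m. (N i j * \<theta> j) *\<^sub>R X i)"
      unfolding Xop_def Nop_def by (simp add: scaleR_sum_left)
    also have "\<dots> = (\<Sum>j<m. \<Sum>i<m. (N i j * \<theta> j) *\<^sub>R X i)"
      by (rule sum.swap)
    also have "\<dots> = (\<Sum>j<m. \<theta> j *\<^sub>R (\<Sum>i<m. N i j *\<^sub>R X i))"
      by (simp add: scaleR_sum_right mult.commute)
    also have "\<dots> = (\<Sum>j<m. \<theta> j *\<^sub>R B (X j))"
      by (rule sum.cong) (simp_all add: col)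
    also have "\<dots> = B (Xop \<theta>)"
      unfolding B_def Xop_def
      by (simp add: mv_sum matrix_vector_mult_scaleR scaleR_sum_right sum.distrib scaleR_add_right scaleR_left_commute mult.commute)
    finally show ?thesis .
  qed
  have \<Theta>nn: "\<forall>i<m. \<Theta> k i \<ge> 0" for k
  proof (induction k)
    case 0 then show ?case using w0 by (simp add: \<Theta>_def)
  next
    case (Suc k)
    then show ?case unfolding \<Theta>_def using Nnn
      by (auto simp: Nop_def intro!: sum_nonneg)
  qed
  have \<Theta>sum: "(\<Sum>i<l1. \<Theta> k i) = c ^ k" for k
  proof (induction k)
    case 0 then show ?case using w0 by (simp add: \<Theta>_def)
  next
    case (Suc k)
    have "(\<Sum>i<l1. \<Theta> (Suc k) i) = (\<Sum>i<l1. \<Sum>j<m. N i j * \<Theta> k j)"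
      by (simp add: \<Theta>_def Nop_def)
    also have "\<dots> = (\<Sum>j<m. (\<Sum>i<l1. N i j) * \<Theta> k j)"
      by (subst sum.swap) (simp add: sum_distrib_right)
    also have "\<dots> = (\<Sum>j<m. if j < l1 then c * \<Theta> k j else 0)"
      by (rule sum.cong) (simp_all add: Ncol)
    also have "\<dots> = c * (\<Sum>j<l1. \<Theta> k j)"
      unfolding m_def sum_if_lt by (simp add: sum_distrib_left)
    finally show ?case using Suc by simp
  qed
  have X\<Theta>: "Xop (\<Theta> k) = (B ^^ k) (y 0)" for k
    by (induction k) (simp_all add: \<Theta>_def XN w0)
  define Q where "Q = eop (exp (t *\<^sub>R (Mop A + c *\<^sub>R 1))) (y 0)"
  have Bfun: "(\<lambda>v. eop (Mop A) v + c *\<^sub>R v) = B" by (simp add: eop_Mop B_def fun_eq_iff)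
  have ser: "(\<lambda>k. (t^k / fact k) *\<^sub>R (B ^^ k) (y 0)) sums Q"
    using exp_series[of t "Mop A" c "y 0"] unfolding Q_def Bfun .
  have yt: "y t = exp (-(c*t)) *\<^sub>R Q"
    unfolding Q_def using sol_unique[OF sol t] exp_shift[of t "Mop A" c] by (simp add: eop_scaleR)
  define W where "W n i = (\<Sum>k<n. (t^k / fact k) * \<Theta> k i)" for n i
  define r where "r n = (\<Sum>i<l1. W n i)" for n
  have S: "(\<Sum>k<n. (t^k / fact k) *\<^sub>R (B ^^ k) (y 0)) = Xop (W n)" for n
  proof -
    have "(\<Sum>k<n. (t^k / fact k) *\<^sub>R (B ^^ k) (y 0)) = (\<Sum>k<n. \<Sum>i<m. ((t^k / fact k) * \<Theta> k i) *\<^sub>R X i)"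
      by (simp add: X\<Theta>[symmetric] Xop_def scaleR_sum_right)
    also have "\<dots> = Xop (W n)"
      unfolding Xop_def W_def by (subst sum.swap) (simp add: scaleR_sum_left)
    finally show ?thesis .
  qed
  have r: "r n = (\<Sum>k<n. (c*t)^k / fact k)" for n
  proof -
    have "r n = (\<Sum>k<n. (t^k / fact k) * (\<Sum>i<l1. \<Theta> k i))"
      unfolding r_def W_def by (subst sum.swap) (simp add: sum_distrib_left)
    then show ?thesis by (simp add: \<Theta>sum power_mult_distrib mult.commute)
  qed
  have rlim: "r \<longlonglongrightarrow> exp (c*t)"
  proof -
    have "(\<lambda>k. (c*t)^k /\<^sub>R fact k) sums exp (c*t)" by (rule exp_converges)
    then show ?thesis unfolding sums_def r by (simp add: divide_inverse mult.commute)
  qed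
  have Slim: "(\<lambda>n. Xop (W n)) \<longlonglongrightarrow> Q"
    using ser unfolding sums_def S .
  have lim: "(\<lambda>n. (1 / r n) *\<^sub>R Xop (W n)) \<longlonglongrightarrow> (1 / exp (c*t)) *\<^sub>R Q"
    by (intro tendsto_intros rlim Slim) simp
  have "(1 / exp (c*t)) *\<^sub>R Q = y t" by (simp add: yt exp_minus field_simps)
  with lim have lim': "(\<lambda>n. (1 / r n) *\<^sub>R Xop (W n)) \<longlonglongrightarrow> y t" by simp
  have ev: "\<forall>\<^sub>F n in sequentially. (1 / r n) *\<^sub>R Xop (W n) \<in> poly_set l1 l2 x xh"
  proof (rule eventually_sequentiallyI[where c=1])
    fix n :: nat assume n: "1 \<le> n"
    have "r n \<ge> 1"
    proof -
      have "r n = (\<Sum>k<Suc (n-1). (c*t)^k / fact k)" unfolding r using n by simp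
      also have "\<dots> = (\<Sum>k<n-1. (c*t)^k / fact k) + (c*t)^(n-1) / fact (n-1)" by simp
      finally have "r n = (\<Sum>k\<in>{..<n}. (c*t)^k / fact k)" unfolding r by simp
      also have "\<dots> \<ge> (\<Sum>k\<in>{0}. (c*t)^k / fact k)"
        by (rule sum_mono2) (use n c0 t in auto)
      finally show ?thesis by simp
    qed
    have "(1 / r n) *\<^sub>R Xop (W n) = (\<Sum>i<l1+l2. (W n i / r n) *\<^sub>R Xcol l1 x xh i)"
      unfolding Xop_def m_def X_def by (simp add: scaleR_sum_right)
    also have "\<dots> \<in> poly_set l1 l2 x xh"
    proof (rule in_poly_from_w)
      show "\<forall>i<l1+l2. W n i / r n \<ge> 0" using \<open>r n \<ge> 1\<close> \<Theta>nn t unfolding W_def m_def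
        by (auto intro!: sum_nonneg divide_nonneg_pos)
      show "(\<Sum>i<l1. W n i / r n) = 1" using \<open>r n \<ge> 1\<close>
        by (simp add: sum_divide_distrib[symmetric] r_def[symmetric])
    qed
    finally show "(1 / r n) *\<^sub>R Xop (W n) \<in> poly_set l1 l2 x xh" .
  qed
  show "y t \<in> poly_set l1 l2 x xh"
    by (rule Lim_in_closed_set[OF closed_poly_set ev _ lim']) simp
qed



lemma deriv_quot:
  fixes f :: "real \<Rightarrow> 'a::real_normed_vector"
  assumes "(f has_vector_derivative D) (at 0 within {0<..})"
  shows "((\<lambda>s. (f s - f 0) /\<^sub>R s) \<longlongrightarrow> D) (at_right 0)"
proof -
  from assms have "((\<lambda>y. (1 / norm (y - 0)) *\<^sub>R (f y - (f 0 + (y - 0) *\<^sub>R D))) \<longlongrightarrow> 0) (at_right 0)"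
    unfolding has_vector_derivative_def has_derivative_within by blast
  then have "((\<lambda>y. (1 / norm (y - 0)) *\<^sub>R (f y - (f 0 + (y - 0) *\<^sub>R D)) + D) \<longlongrightarrow> 0 + D) (at_right 0)"
    by (rule tendsto_add) simp
  moreover have "\<forall>\<^sub>F y in at_right 0. (1 / norm (y - 0)) *\<^sub>R (f y - (f 0 + (y - 0) *\<^sub>R D)) + D = (f y - f 0) /\<^sub>R y"
    using eventually_at_right_less[of "0::real"]
  proof eventually_elim
    case (elim y)
    then show ?case by (simp add: scaleR_diff_right scaleR_add_right divide_inverse)
  qed
  ultimately show ?thesis by (simp add: Lim_transform_eventually)
qed

lemma in_closed_lim:
  fixes g :: "real \<Rightarrow> 'a::real_normed_vector"
  assumes "closed K" "\<And>s. s > 0 \<Longrightarrow> g s \<in> K" "(g \<longlongrightarrow> D) (at_right 0)"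
  shows "D \<in> K"
proof (rule Lim_in_closed_set[OF assms(1) _ _ assms(3)])
  show "\<forall>\<^sub>F s in at_right 0. g s \<in> K"
    using eventually_at_right_less[of "0::real"] by eventually_elim (rule assms(2))
qed simp

lemma flow:
  assumes inv: "invariant_set A S" and p: "p \<in> S" and s: "s \<ge> 0"
  shows "eop (exp (s *\<^sub>R Mop A)) p \<in> S"
proof -
  have "lin_solution A y \<longrightarrow> y 0 \<in> S \<longrightarrow> (\<forall>t\<ge>0. y t \<in> S)" for y
    using inv unfolding invariant_set_def by blast
  from this[of "\<lambda>t. eop (exp (t *\<^sub>R Mop A)) p"] show ?thesis
    using sol_exists[of A p] p s by (simp add: eop_one)
qed

lemma dq: "((\<lambda>s. (eop (exp (s *\<^sub>R Mop A)) p - p) /\<^sub>R s) \<longlongrightarrow> A *v p) (at_right 0)"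
  using deriv_quot[OF eop_exp_deriv[of "Mop A" p 0 "{0<..}"]] by (simp add: eop_one eop_Mop)

lemma vert:
  fixes x xh :: "nat \<Rightarrow> real^'n" and A :: "real^'n^'n"
  assumes inv: "invariant_set A (poly_set l1 l2 x xh)" and j: "j < l1"
  shows "\<exists>a. (\<forall>i<l1+l2. a i \<ge> 0) \<and>
     A *v x j = (\<Sum>i<l1+l2. a i *\<^sub>R (if i < l1 then x i - x j else xh (i - l1)))"
proof -
  define V where "V i = (if i < l1 then x i - x j else xh (i - l1))" for i
  have xj: "x j \<in> poly_set l1 l2 x xh"
  proof -
    have "(\<Sum>i<l1+l2. (if i = j then 1 else 0) *\<^sub>R Xcol l1 x xh i) \<in> poly_set l1 l2 x xh"
      by (rule in_poly_from_w) (use j in auto)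
    then show ?thesis using j by (simp add: sum_delta_scaleR)
  qed
  have "A *v x j \<in> cone_of V (l1+l2)"
  proof (rule in_closed_lim[OF closed_cone_of _ dq])
    fix s :: real assume s: "s > 0"
    define q where "q = eop (exp (s *\<^sub>R Mop A)) (x j)"
    have "q \<in> poly_set l1 l2 x xh" unfolding q_def using flow[OF inv xj] s by simp
    then obtain w where w: "\<forall>i<l1+l2. w i \<ge> 0" "(\<Sum>i<l1. w i) = 1"
      "q = (\<Sum>i<l1+l2. w i *\<^sub>R Xcol l1 x xh i)" by (rule poly_to_w)
    have q2: "q = (\<Sum>i<l1. w i *\<^sub>R x i) + (\<Sum>k<l2. w (l1+k) *\<^sub>R xh k)"
      using w(3) by (simp add: sum_split_add)
    have "(\<Sum>i<l1. w i *\<^sub>R x j) = x j"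
      using w(2) by (simp add: scaleR_sum_left[symmetric])
    then have "(\<Sum>i<l1+l2. w i *\<^sub>R V i) = q - x j"
      unfolding q2 V_def sum_split_add by (simp add: scaleR_diff_right sum_subtractf)
    then have "(q - x j) /\<^sub>R s = inverse s *\<^sub>R (\<Sum>i<l1+l2. w i *\<^sub>R V i)" by simp
    also have "\<dots> = (\<Sum>i<l1+l2. (w i / s) *\<^sub>R V i)"
      by (simp add: scaleR_sum_right divide_inverse mult.commute)
    finally have "(q - x j) /\<^sub>R s = (\<Sum>i<l1+l2. (w i / s) *\<^sub>R V i)" .
    moreover have "\<forall>i<l1+l2. w i / s \<ge> 0" using w(1) s by auto
    ultimately show "(eop (exp (s *\<^sub>R Mop A)) (x j) - x j) /\<^sub>R s \<in> cone_of V (l1+l2)"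
      unfolding cone_of_def q_def[symmetric]
      by (intro CollectI exI[where x="\<lambda>i. w i / s"]) simp
  qed
  then show ?thesis unfolding cone_of_def V_def by blast
qed

lemma ray_cone:
  fixes x xh :: "nat \<Rightarrow> real^'n" and A :: "real^'n^'n"
  assumes inv: "invariant_set A (poly_set l1 l2 x xh)" and l1: "l1 \<ge> 1" and k: "k < l2"
    and s: "s \<ge> 0"
  shows "eop (exp (s *\<^sub>R Mop A)) (xh k) \<in> cone_of xh l2"
proof -
  define E where "E = exp (s *\<^sub>R Mop A)"
  have "bounded (simplex_of x l1)"
    by (simp add: simplex_of_hull compact_convex_hull finite_imp_compact compact_imp_bounded)
  then obtain Bd where Bd: "\<And>z. z \<in> simplex_of x l1 \<Longrightarrow> norm z \<le> Bd" unfolding bounded_iff by blast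
  have pn: "x 0 + real n *\<^sub>R xh k \<in> poly_set l1 l2 x xh" for n
  proof -
    have "(\<Sum>i<l1. (if i = 0 then 1 else 0) *\<^sub>R x i) + (\<Sum>j<l2. (if j = k then real n else 0) *\<^sub>R xh j)
       \<in> poly_set l1 l2 x xh"
      unfolding poly_set_def using l1
      by (intro CollectI exI[where x="\<lambda>i. if i = 0 then 1 else 0"] exI[where x="\<lambda>j. if j = k then real n else 0"]) simp
    then show ?thesis using l1 k by (simp add: sum_delta_scaleR)
  qed
  have "\<forall>n. \<exists>b a. b \<in> cone_of xh l2 \<and> a \<in> simplex_of x l1 \<and>
        eop E (x 0) + real n *\<^sub>R eop E (xh k) = b + a"
  proof
    fix n
    have "eop E (x 0 + real n *\<^sub>R xh k) \<in> poly_set l1 l2 x xh"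
      unfolding E_def using flow[OF inv pn s] .
    then show "\<exists>b a. b \<in> cone_of xh l2 \<and> a \<in> simplex_of x l1 \<and>
        eop E (x 0) + real n *\<^sub>R eop E (xh k) = b + a"
      unfolding poly_set_sums by (auto simp: blinfun.bilinear_simps)
  qed
  then obtain bb aa where ba: "\<And>n. bb n \<in> cone_of xh l2" "\<And>n. aa n \<in> simplex_of x l1"
    "\<And>n. eop E (x 0) + real n *\<^sub>R eop E (xh k) = bb n + aa n"
    by metis
  define g where "g n = (1 / real n) *\<^sub>R bb n" for n
  have geq: "g n = eop E (xh k) + (1 / real n) *\<^sub>R (eop E (x 0) - aa n)" if "n \<ge> 1" for n
  proof -
    have "bb n = eop E (x 0) + real n *\<^sub>R eop E (xh k) - aa n" using ba(3)[of n] by (simp add: algebra_simps)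
    then have "g n = (1 / real n) *\<^sub>R (eop E (x 0) + real n *\<^sub>R eop E (xh k) - aa n)"
      unfolding g_def by simp
    also have "\<dots> = eop E (xh k) + (1 / real n) *\<^sub>R (eop E (x 0) - aa n)"
      using that by (simp add: scaleR_diff_right scaleR_add_right)
    finally show ?thesis .
  qed
  have z: "(\<lambda>n. (1 / real n) *\<^sub>R (eop E (x 0) - aa n)) \<longlonglongrightarrow> 0"
  proof (rule Lim_null_comparison)
    show "\<forall>\<^sub>F n in sequentially. norm ((1 / real n) *\<^sub>R (eop E (x 0) - aa n)) \<le> (norm (eop E (x 0)) + Bd) / real n"
    proof (rule always_eventually, rule allI)
      fix n
      have "norm (eop E (x 0) - aa n) \<le> norm (eop E (x 0)) + Bd"
        using norm_triangle_ineq4[of "eop E (x 0)" "aa n"] Bd[OF ba(2)[of n]] by linarith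
      then show "norm ((1 / real n) *\<^sub>R (eop E (x 0) - aa n)) \<le> (norm (eop E (x 0)) + Bd) / real n"
        by (simp add: divide_right_mono)
    qed
    show "(\<lambda>n. (norm (eop E (x 0)) + Bd) / real n) \<longlonglongrightarrow> 0"
      by (rule lim_const_over_n)
  qed
  have "(\<lambda>n. eop E (xh k) + (1 / real n) *\<^sub>R (eop E (x 0) - aa n)) \<longlonglongrightarrow> eop E (xh k) + 0"
    by (intro tendsto_add tendsto_const z)
  then have l0: "(\<lambda>n. eop E (xh k) + (1 / real n) *\<^sub>R (eop E (x 0) - aa n)) \<longlonglongrightarrow> eop E (xh k)"
    by simp
  have "\<forall>\<^sub>F n in sequentially. eop E (xh k) + (1 / real n) *\<^sub>R (eop E (x 0) - aa n) = g n"
    unfolding eventually_sequentially using geq by (metis One_nat_def)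
  from Lim_transform_eventually[OF l0 this] have glim: "g \<longlonglongrightarrow> eop E (xh k)" .
  have "\<forall>\<^sub>F n in sequentially. g n \<in> cone_of xh l2"
    unfolding g_def using convex_cone_cone_of[of xh l2] ba(1)
    by (intro always_eventually allI) (simp add: convex_cone_iff)
  from Lim_in_closed_set[OF closed_cone_of this _ glim] show ?thesis unfolding E_def by simp
qed

lemma ray:
  fixes x xh :: "nat \<Rightarrow> real^'n" and A :: "real^'n^'n"
  assumes inv: "invariant_set A (poly_set l1 l2 x xh)" and l1: "l1 \<ge> 1" and k: "k < l2"
  shows "\<exists>b. (\<forall>i\<le>l2. b i \<ge> 0) \<and> A *v xh k = (\<Sum>i<l2. b i *\<^sub>R xh i) - b l2 *\<^sub>R xh k"
proof -
  define W where "W i = (if i < l2 then xh i else - xh k)" for i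
  have "A *v xh k \<in> cone_of W (Suc l2)"
  proof (rule in_closed_lim[OF closed_cone_of _ dq])
    fix s :: real assume s: "s > 0"
    obtain b where b: "\<forall>i<l2. b i \<ge> 0" "eop (exp (s *\<^sub>R Mop A)) (xh k) = (\<Sum>i<l2. b i *\<^sub>R xh i)"
      using ray_cone[OF inv l1 k, of s] s unfolding cone_of_def by auto
    define a where "a i = (if i < l2 then b i / s else 1 / s)" for i
    have "(\<Sum>i<Suc l2. a i *\<^sub>R W i) = (\<Sum>i<l2. (b i / s) *\<^sub>R xh i) - (1 / s) *\<^sub>R xh k"
      by (simp add: a_def W_def)
    also have "\<dots> = (eop (exp (s *\<^sub>R Mop A)) (xh k) - xh k) /\<^sub>R s"
      unfolding b(2) by (simp add: scaleR_sum_right scaleR_diff_right divide_inverse mult.commute)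
    finally have eq: "(eop (exp (s *\<^sub>R Mop A)) (xh k) - xh k) /\<^sub>R s = (\<Sum>i<Suc l2. a i *\<^sub>R W i)" ..
    have "\<forall>i<Suc l2. a i \<ge> 0" using b(1) s by (auto simp: a_def)
    with eq show "(eop (exp (s *\<^sub>R Mop A)) (xh k) - xh k) /\<^sub>R s \<in> cone_of W (Suc l2)"
      unfolding cone_of_def by blast
  qed
  then obtain a where a: "\<forall>i<Suc l2. a i \<ge> 0" "A *v xh k = (\<Sum>i<Suc l2. a i *\<^sub>R W i)"
    unfolding cone_of_def by blast
  have "A *v xh k = (\<Sum>i<l2. a i *\<^sub>R xh i) - a l2 *\<^sub>R xh k"
    using a(2) by (simp add: W_def)
  moreover have "\<forall>i\<le>l2. a i \<ge> 0" using a(1) by auto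
  ultimately show ?thesis by blast
qed

lemma fwd:
  fixes x xh :: "nat \<Rightarrow> real^'n" and A :: "real^'n^'n"
  assumes inv: "invariant_set A (poly_set l1 l2 x xh)" and l1: "l1 \<ge> 1"
  shows "\<exists>L :: nat \<Rightarrow> nat \<Rightarrow> real.
       (\<forall>i<l1+l2. \<forall>j<l1+l2. i \<noteq> j \<longrightarrow> L i j \<ge> 0) \<and>
       (\<forall>j<l1+l2. (\<Sum>k<l1+l2. L k j *\<^sub>R Xcol l1 x xh k) = A *v Xcol l1 x xh j) \<and>
       (\<forall>j<l1+l2. (\<Sum>k<l1. L k j) = 0)"
proof -
  have "\<forall>j. \<exists>a. j < l1 \<longrightarrow> (\<forall>i<l1+l2. a i \<ge> 0) \<and>
     A *v x j = (\<Sum>i<l1+l2. a i *\<^sub>R (if i < l1 then x i - x j else xh (i - l1)))"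
  proof
    fix j show "\<exists>a. j < l1 \<longrightarrow> (\<forall>i<l1+l2. a i \<ge> 0) \<and>
     A *v x j = (\<Sum>i<l1+l2. a i *\<^sub>R (if i < l1 then x i - x j else xh (i - l1)))"
    proof (cases "j < l1")
      case True
      from vert[OF inv True] obtain a where "(\<forall>i<l1+l2. a i \<ge> 0) \<and>
         A *v x j = (\<Sum>i<l1+l2. a i *\<^sub>R (if i < l1 then x i - x j else xh (i - l1)))" ..
      then show ?thesis by (intro exI[where x=a]) simp
    qed simp
  qed
  from choice[OF this] obtain aa where aa0: "\<forall>j. j < l1 \<longrightarrow> (\<forall>i<l1+l2. aa j i \<ge> 0) \<and>
     A *v x j = (\<Sum>i<l1+l2. aa j i *\<^sub>R (if i < l1 then x i - x j else xh (i - l1)))" ..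
  have aa: "(\<forall>i<l1+l2. aa j i \<ge> 0) \<and>
     A *v x j = (\<Sum>i<l1+l2. aa j i *\<^sub>R (if i < l1 then x i - x j else xh (i - l1)))" if "j < l1" for j
    using aa0 that by blast
  have "\<forall>k. \<exists>b. k < l2 \<longrightarrow> (\<forall>i\<le>l2. b i \<ge> 0) \<and> A *v xh k = (\<Sum>i<l2. b i *\<^sub>R xh i) - b l2 *\<^sub>R xh k"
  proof
    fix k show "\<exists>b. k < l2 \<longrightarrow> (\<forall>i\<le>l2. b i \<ge> 0) \<and> A *v xh k = (\<Sum>i<l2. b i *\<^sub>R xh i) - b l2 *\<^sub>R xh k"
    proof (cases "k < l2")
      case True
      from ray[OF inv l1 True] obtain b where "(\<forall>i\<le>l2. b i \<ge> 0) \<and> A *v xh k = (\<Sum>i<l2. b i *\<^sub>R xh i) - b l2 *\<^sub>R xh k" ..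
      then show ?thesis by (intro exI[where x=b]) simp
    qed simp
  qed
  from choice[OF this] obtain bb where bb0: "\<forall>k. k < l2 \<longrightarrow> (\<forall>i\<le>l2. bb k i \<ge> 0) \<and>
      A *v xh k = (\<Sum>i<l2. bb k i *\<^sub>R xh i) - bb k l2 *\<^sub>R xh k" ..
  have bb: "(\<forall>i\<le>l2. bb k i \<ge> 0) \<and>
      A *v xh k = (\<Sum>i<l2. bb k i *\<^sub>R xh i) - bb k l2 *\<^sub>R xh k" if "k < l2" for k
    using bb0 that by blast
  define S where "S j = (\<Sum>i<l1. aa j i)" for j
  define L where "L i j = (if j < l1 then aa j i - (if i = j then S j else 0)
     else if i < l1 then 0 else bb (j - l1) (i - l1) - (if i = j then bb (j - l1) l2 else 0))" for i j
  have P1: "\<forall>i<l1+l2. \<forall>j<l1+l2. i \<noteq> j \<longrightarrow> L i j \<ge> 0"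
  proof (intro allI impI)
    fix i j assume ij: "i < l1+l2" "j < l1+l2" "i \<noteq> j"
    show "L i j \<ge> 0"
    proof (cases "j < l1")
      case True then show ?thesis using aa[OF True] ij by (simp add: L_def)
    next
      case False
      then have "j - l1 < l2" using ij by simp
      then show ?thesis using bb[of "j - l1"] ij False by (simp add: L_def)
    qed
  qed
  have P3: "\<forall>j<l1+l2. (\<Sum>k<l1. L k j) = 0"
  proof (intro allI impI)
    fix j assume j: "j < l1+l2"
    show "(\<Sum>k<l1. L k j) = 0"
    proof (cases "j < l1")
      case True then show ?thesis by (simp add: L_def sum_subtractf S_def)
    next
      case False then show ?thesis by (simp add: L_def)
    qed
  qed
  have P2: "\<forall>j<l1+l2. (\<Sum>k<l1+l2. L k j *\<^sub>R Xcol l1 x xh k) = A *v Xcol l1 x xh j"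
  proof (intro allI impI)
    fix j assume j: "j < l1+l2"
    show "(\<Sum>k<l1+l2. L k j *\<^sub>R Xcol l1 x xh k) = A *v Xcol l1 x xh j"
    proof (cases "j < l1")
      case True
      have lhs: "(\<Sum>k<l1+l2. L k j *\<^sub>R Xcol l1 x xh k) =
         (\<Sum>i<l1. aa j i *\<^sub>R x i) - S j *\<^sub>R x j + (\<Sum>k<l2. aa j (l1+k) *\<^sub>R xh k)"
        unfolding sum_split_add using True
        by (simp add: L_def scaleR_diff_left sum_subtractf sum_delta_scaleR)
      have "A *v x j = (\<Sum>i<l1. aa j i *\<^sub>R (x i - x j)) + (\<Sum>k<l2. aa j (l1+k) *\<^sub>R xh k)"
        using aa[OF True] by (simp add: sum_split_add)
      also have "\<dots> = (\<Sum>i<l1. aa j i *\<^sub>R x i) - S j *\<^sub>R x j + (\<Sum>k<l2. aa j (l1+k) *\<^sub>R xh k)"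
        by (simp add: scaleR_diff_right sum_subtractf S_def scaleR_sum_left)
      finally show ?thesis using lhs True by simp
    next
      case False
      define k where "k = j - l1"
      have k: "k < l2" "j = l1 + k" using j False by (auto simp: k_def)
      have "(\<Sum>k'<l1+l2. L k' j *\<^sub>R Xcol l1 x xh k') =
         (\<Sum>i<l2. bb k i *\<^sub>R xh i) - bb k l2 *\<^sub>R xh k"
        unfolding sum_split_add using k
        by (simp add: L_def scaleR_diff_left sum_subtractf sum_delta_scaleR)
      also have "\<dots> = A *v xh k" using bb[OF k(1)] by simp
      finally show ?thesis using k by simp
    qed
  qed
  show ?thesis using P1 P2 P3 by blast
qed

theorem theorem3p8:
  fixes l1 l2 :: nat and x xh :: "nat \<Rightarrow> real^'n" and A :: "real^'n^'n"
  assumes "l1 \<ge> 1"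
  shows "invariant_set A (poly_set l1 l2 x xh) \<longleftrightarrow>
    (\<exists>L :: nat \<Rightarrow> nat \<Rightarrow> real.
       (\<forall>i<l1+l2. \<forall>j<l1+l2. i \<noteq> j \<longrightarrow> L i j \<ge> 0) \<and>
       (\<forall>j<l1+l2. (\<Sum>k<l1+l2. L k j *\<^sub>R Xcol l1 x xh k) = A *v Xcol l1 x xh j) \<and>
       (\<forall>j<l1+l2. (\<Sum>k<l1. L k j) = 0))"
proof
  assume "invariant_set A (poly_set l1 l2 x xh)"
  then show "\<exists>L :: nat \<Rightarrow> nat \<Rightarrow> real.
       (\<forall>i<l1+l2. \<forall>j<l1+l2. i \<noteq> j \<longrightarrow> L i j \<ge> 0) \<and>
       (\<forall>j<l1+l2. (\<Sum>k<l1+l2. L k j *\<^sub>R Xcol l1 x xh k) = A *v Xcol l1 x xh j) \<and>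
       (\<forall>j<l1+l2. (\<Sum>k<l1. L k j) = 0)" by (rule fwd[OF _ assms])
next
  assume "\<exists>L :: nat \<Rightarrow> nat \<Rightarrow> real.
       (\<forall>i<l1+l2. \<forall>j<l1+l2. i \<noteq> j \<longrightarrow> L i j \<ge> 0) \<and>
       (\<forall>j<l1+l2. (\<Sum>k<l1+l2. L k j *\<^sub>R Xcol l1 x xh k) = A *v Xcol l1 x xh j) \<and>
       (\<forall>j<l1+l2. (\<Sum>k<l1. L k j) = 0)"
  then show "invariant_set A (poly_set l1 l2 x xh)"
    by (elim exE conjE) (rule bwd)
qed

end
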